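(* Let $F$ be the field of fractions of $R$, let $t_1,t_2$ be independent indeterminates, and work in $\mathrm{BB}_2\otimes_R F(t_1,t_2)$. Put $R_1(t)=-\delta t(t+q\lambda^{-1})+(t-1)(t+q\lambda^{-1})X_1+\delta t(t-1)e_1$ and $K(t)=\bigl(t^2q_1(1-t^2)^{-1}+Y\bigr)f_1(t)$, where $f_1$ is an arbitrary function with values in $F(t_1,t_2)$. Then the reflection equation $R_1(t_1/t_2)K(t_1)R_1(t_1t_2)K(t_2)=K(t_2)R_1(t_1t_2)K(t_1)R_1(t_1/t_2)$ holds.
   Context: $R$ is an integral domain with units $q,\lambda,x,q_0$ and elements $A,q_1$; $\delta=q-q^{-1}$; standing assumptions $x\delta=\delta-\lambda+\lambda^{-1}$, $q_0=q^{-1}$, $A(1-q_0\lambda)=q_1x$. $\mathrm{BB}_2$ is the unital $R$-algebra generated by invertible $Y,X_1$ and $e_1$ with relations $X_1e_1=e_1X_1=\lambda e_1$, $e_1^2=xe_1$, $X_1^{-1}=X_1-\delta+\delta e_1$, $X_1^2=1+\delta X_1-\delta\lambda e_1$, $X_1YX_1Y=YX_1YX_1$, $Y^2=q_1Y+q_0$, $YX_1Ye_1=e_1$, $e_1Ye_1=Ae_1$; it is assumed that $e_1\ne0$ with $re_1=0\Rightarrow r=0$ for $r\in R$, and $e_1,Ye_1$ linearly independent. *)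

theory Defs
  imports "HOL-Computational_Algebra.Polynomial"
begin

text \<open>A bivariate polynomial is represented as an element of R[X][Y]; inner variable gets t1,
  outer variable gets t2.\<close>
definition alg_indep2 :: "('r::comm_ring_1 \<Rightarrow> 'k::field) \<Rightarrow> 'k \<Rightarrow> 'k \<Rightarrow> bool" where
  "alg_indep2 \<iota> t1 t2 \<longleftrightarrow>
     (\<forall>p :: 'r poly poly. p \<noteq> 0 \<longrightarrow>
        poly (map_poly (\<lambda>c. poly (map_poly \<iota> c) t1) p) t2 \<noteq> 0)"

definition Rmat :: "('k::field \<Rightarrow> 'a::ring_1) \<Rightarrow> 'k \<Rightarrow> 'k \<Rightarrow> 'k \<Rightarrow> 'a \<Rightarrow> 'a \<Rightarrow> 'k \<Rightarrow> 'a" where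
  "Rmat \<phi> d q lam X1 e1 t =
     \<phi> (- d * t * (t + q * inverse lam)) + \<phi> ((t - 1) * (t + q * inverse lam)) * X1
     + \<phi> (d * t * (t - 1)) * e1"

definition Kmat :: "('k::field \<Rightarrow> 'a::ring_1) \<Rightarrow> 'k \<Rightarrow> 'a \<Rightarrow> ('k \<Rightarrow> 'k) \<Rightarrow> 'k \<Rightarrow> 'a" where
  "Kmat \<phi> q1 Y f1 t = (\<phi> (t^2 * q1 * inverse (1 - t^2)) + Y) * \<phi> (f1 t)"

end

theory Submission
  imports Defs
begin

datatype 'k v12 = V 'k 'k 'k 'k 'k 'k 'k 'k 'k 'k 'k 'k

fun vadd :: "'k::field v12 \<Rightarrow> 'k v12 \<Rightarrow> 'k v12" where
  "vadd (V a0 a1 a2 a3 a4 a5 a6 a7 a8 a9 a10 a11) (V b0 b1 b2 b3 b4 b5 b6 b7 b8 b9 b10 b11) =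
   V (a0+b0) (a1+b1) (a2+b2) (a3+b3) (a4+b4) (a5+b5) (a6+b6) (a7+b7) (a8+b8) (a9+b9) (a10+b10) (a11+b11)"

fun smul :: "'k::field \<Rightarrow> 'k v12 \<Rightarrow> 'k v12" where
  "smul c (V a0 a1 a2 a3 a4 a5 a6 a7 a8 a9 a10 a11) =
   V (c*a0) (c*a1) (c*a2) (c*a3) (c*a4) (c*a5) (c*a6) (c*a7) (c*a8) (c*a9) (c*a10) (c*a11)"

fun lin :: "'k::field v12 \<Rightarrow> (nat \<Rightarrow> 'k v12) \<Rightarrow> 'k v12" where
  "lin (V a0 a1 a2 a3 a4 a5 a6 a7 a8 a9 a10 a11) C =
   vadd (smul a0 (C 0)) (vadd (smul a1 (C 1)) (vadd (smul a2 (C 2)) (vadd (smul a3 (C 3))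
   (vadd (smul a4 (C 4)) (vadd (smul a5 (C 5)) (vadd (smul a6 (C 6)) (vadd (smul a7 (C 7))
   (vadd (smul a8 (C 8)) (vadd (smul a9 (C 9)) (vadd (smul a10 (C 10)) (smul a11 (C 11))))))))))))"

locale alg =
  fixes \<phi> :: "'k::field \<Rightarrow> 'a::ring_1"
  assumes phi_add: "\<And>a b. \<phi> (a + b) = \<phi> a + \<phi> b"
    and phi_mult: "\<And>a b. \<phi> (a * b) = \<phi> a * \<phi> b"
    and phi_one: "\<phi> 1 = 1"
    and phi_central: "\<And>a z. \<phi> a * z = z * \<phi> a"
begin

lemma phi_zero[simp]: "\<phi> 0 = 0"
  using phi_add[of 0 0] by simp

lemma phi_uminus: "\<phi> (- a) = - \<phi> a"
  using phi_add[of a "-a"] by (simp add: eq_neg_iff_add_eq_0 add.commute)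

lemma phi_diff: "\<phi> (a - b) = \<phi> a - \<phi> b"
  using phi_add[of a "-b"] phi_uminus[of b] by simp

lemma phi_left: "z * (\<phi> c * w) = \<phi> c * (z * w)"
  by (metis mult.assoc phi_central)

lemma phi_pair: "(\<phi> a * M) * (\<phi> b * N) = \<phi> (a * b) * (M * N)"
proof -
  have "(\<phi> a * M) * (\<phi> b * N) = \<phi> a * (M * (\<phi> b * N))" by (simp add: mult.assoc)
  also have "\<dots> = \<phi> a * (\<phi> b * (M * N))" by (simp only: phi_left[of M])
  also have "\<dots> = \<phi> (a * b) * (M * N)" by (simp add: phi_mult mult.assoc)
  finally show ?thesis .
qed

lemma delta0_core:
  assumes XX: "X * X = 1" and r5: "X * Y * X * Y = Y * X * Y * X"
  shows "X * (\<phi> c1 + Y) * X * (\<phi> c2 + Y) = (\<phi> c2 + Y) * X * (\<phi> c1 + Y) * X"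
proof -
  have XXz: "X * (X * z) = z" for z using XX by (simp add: mult.assoc[symmetric])
  have r5z: "Y * (X * (Y * X)) = X * (Y * (X * Y))" using r5 by (simp add: mult.assoc)
  have cX: "X * \<phi> c = \<phi> c * X" for c by (simp add: phi_central)
  have cY: "Y * \<phi> c = \<phi> c * Y" for c by (simp add: phi_central)
  have cXz: "X * (\<phi> c * z) = \<phi> c * (X * z)" for c z by (rule phi_left)
  have cYz: "Y * (\<phi> c * z) = \<phi> c * (Y * z)" for c z by (rule phi_left)
  have pp: "\<phi> a * \<phi> b = \<phi> (a * b)" for a b by (simp add: phi_mult)
  have ppz: "\<phi> a * (\<phi> b * z) = \<phi> (a * b) * z" for a b z by (simp add: phi_mult mult.assoc)
  have L: "X * (\<phi> c1 + Y) * X * (\<phi> c2 + Y) = \<phi> (c1 * c2) + \<phi> c1 * Y + \<phi> c2 * (X * (Y * X)) + X * (Y * (X * Y))"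
    by (simp add: mult.assoc distrib_left distrib_right XX XXz cX cY cXz cYz pp ppz add.assoc)
  have R: "(\<phi> c2 + Y) * X * (\<phi> c1 + Y) * X = \<phi> (c2 * c1) + \<phi> c2 * (X * (Y * X)) + \<phi> c1 * Y + X * (Y * (X * Y))"
    by (simp add: mult.assoc distrib_left distrib_right XX XXz cX cY cXz cYz pp ppz add.assoc r5z)
  show ?thesis unfolding L R by (simp add: mult.commute add_ac)
qed

definition ev :: "(nat \<Rightarrow> 'a) \<Rightarrow> 'k v12 \<Rightarrow> 'a" where
  "ev b v = (case v of V a0 a1 a2 a3 a4 a5 a6 a7 a8 a9 a10 a11 \<Rightarrow>
     \<phi> a0 * b 0 + \<phi> a1 * b 1 + \<phi> a2 * b 2 + \<phi> a3 * b 3 + \<phi> a4 * b 4 + \<phi> a5 * b 5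
     + \<phi> a6 * b 6 + \<phi> a7 * b 7 + \<phi> a8 * b 8 + \<phi> a9 * b 9 + \<phi> a10 * b 10 + \<phi> a11 * b 11)"

lemma ev_add: "ev b (vadd u w) = ev b u + ev b w"
  by (cases u; cases w) (simp add: ev_def phi_add distrib_right algebra_simps)

lemma ev_smul: "ev b (smul c u) = \<phi> c * ev b u"
  by (cases u) (simp add: ev_def phi_mult distrib_left mult.assoc)

lemma ev_lin: "ev b (lin v C) =  (case v of V a0 a1 a2 a3 a4 a5 a6 a7 a8 a9 a10 a11 \<Rightarrow>
     \<phi> a0 * ev b (C 0) + \<phi> a1 * ev b (C 1) + \<phi> a2 * ev b (C 2) + \<phi> a3 * ev b (C 3) + \<phi> a4 * ev b (C 4)
     + \<phi> a5 * ev b (C 5) + \<phi> a6 * ev b (C 6) + \<phi> a7 * ev b (C 7) + \<phi> a8 * ev b (C 8)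
     + \<phi> a9 * ev b (C 9) + \<phi> a10 * ev b (C 10) + \<phi> a11 * ev b (C 11))"
  by (cases v) (simp add: ev_add ev_smul add.assoc)

lemma mult_ev:
  assumes "\<And>i. i < 12 \<Longrightarrow> g * b i = ev b (C i)"
  shows "g * ev b v = ev b (lin v C)"
proof (cases v)
  case (V a0 a1 a2 a3 a4 a5 a6 a7 a8 a9 a10 a11)
  have h: "\<And>i. i < 12 \<Longrightarrow> g * (\<phi> c * b i) = \<phi> c * ev b (C i)" for c
    using assms by (simp add: phi_left)
  show ?thesis unfolding V ev_lin
    by (simp add: ev_def distrib_left h)
qed

end

locale bb = alg \<phi> for \<phi> :: "'k::field \<Rightarrow> 'a::ring_1" +
  fixes X Y e :: 'a and D Q Q0 Q1 L Xs As :: 'k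
  assumes Dnz: "D \<noteq> 0" and Lnz: "L \<noteq> 0"
    and hD: "D = Q - Q0" and hQ: "Q0 * Q = 1"
    and r1a: "X * e = \<phi> L * e" and r1b: "e * X = \<phi> L * e"
    and r2: "e * e = \<phi> Xs * e"
    and r4: "X * X = 1 + \<phi> D * X - \<phi> (D * L) * e"
    and r5: "X * Y * X * Y = Y * X * Y * X"
    and r6: "Y * Y = \<phi> Q1 * Y + \<phi> Q0"
    and r7: "Y * X * Y * e = e"
    and r8: "e * Y * e = \<phi> As * e"
    and Yinv: "\<exists>Yi. Y * Yi = 1 \<and> Yi * Y = 1"
begin

lemma phi_phi: "\<phi> c * (\<phi> d * w) = \<phi> (c * d) * w"
  by (simp add: phi_mult mult.assoc)

lemma Xz: "X * (X * z) = z + \<phi> D * (X * z) - \<phi> (D * L) * (e * z)"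
proof -
  have "X * (X * z) = (X * X) * z" by (simp add: mult.assoc)
  also have "\<dots> = z + \<phi> D * (X * z) - \<phi> (D * L) * (e * z)"
    unfolding r4 by (simp add: ring_distribs mult.assoc)
  finally show ?thesis .
qed


lemma zv: assumes "a = b" shows "a * z = b * z" using assms by simp

lemma phiX: "X * (\<phi> c * w) = \<phi> c * (X * w)" by (rule phi_left)
lemma phiY: "Y * (\<phi> c * w) = \<phi> c * (Y * w)" by (rule phi_left)
lemma phie: "e * (\<phi> c * w) = \<phi> c * (e * w)" by (rule phi_left)
lemma phiX1: "X * \<phi> c = \<phi> c * X" by (simp add: phi_central)
lemma phiY1: "Y * \<phi> c = \<phi> c * Y" by (simp add: phi_central)
lemma phie1: "e * \<phi> c = \<phi> c * e" by (simp add: phi_central)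

lemma Xe_z: "X * (e * z) = \<phi> L * (e * z)" using zv[OF r1a, of z] by (simp add: mult.assoc)
lemma eX_z: "e * (X * z) = \<phi> L * (e * z)" using zv[OF r1b, of z] by (simp add: mult.assoc)
lemma ee_z: "e * (e * z) = \<phi> Xs * (e * z)" using zv[OF r2, of z] by (simp add: mult.assoc)
lemma YY_z: "Y * (Y * z) = \<phi> Q1 * (Y * z) + \<phi> Q0 * z" using zv[OF r6, of z] by (simp add: mult.assoc distrib_right)
lemma r7_1: "Y * (X * (Y * e)) = e" using r7 by (simp add: mult.assoc)
lemma r7_z: "Y * (X * (Y * (e * z))) = e * z" using zv[OF r7, of z] by (simp add: mult.assoc)
lemma r8_1: "e * (Y * e) = \<phi> As * e" using r8 by (simp add: mult.assoc)
lemma r8_z: "e * (Y * (e * z)) = \<phi> As * (e * z)" using zv[OF r8, of z] by (simp add: mult.assoc)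
lemma r5_1: "Y * (X * (Y * X)) = X * (Y * (X * Y))" using r5 by (simp add: mult.assoc)
lemma r5_z: "Y * (X * (Y * (X * z))) = X * (Y * (X * (Y * z)))" using zv[OF r5, of z] by (simp add: mult.assoc)
lemma XX_1: "X * X = 1 + \<phi> D * X - \<phi> (D * L) * e" by (rule r4)

lemmas rn0 = mult.assoc phiX phiY phie phiX1 phiY1 phie1 phi_phi ring_distribs phi_add phi_diff phi_uminus phi_one
  r1a r1b r2 Xe_z eX_z ee_z r6 YY_z r7_1 r7_z r8_1 r8_z r5_1 r5_z XX_1 Xz

lemma Ycancel: assumes "Y * a = Y * c" shows "a = c"
proof -
  obtain Yi where "Yi * Y = 1" using Yinv by blast
  then have "Yi * (Y * a) = a" "Yi * (Y * c) = c" by (simp_all add: mult.assoc[symmetric])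
  then show ?thesis using assms by metis
qed

lemma Ycancel_r: assumes "a * Y = c * Y" shows "a = c"
proof -
  obtain Yi where "Y * Yi = 1" using Yinv by blast
  then have "(a * Y) * Yi = a" "(c * Y) * Yi = c" by (simp_all add: mult.assoc)
  then show ?thesis using assms by metis
qed

lemma QQ0: "Q * Q0 = 1" using hQ by (simp add: mult.commute)

lemma eYXY_1: "e * (Y * (X * Y)) = e"
proof -
  have a: "Y * (X * (Y * (X * X))) = Y * (X * Y) + \<phi> D * (X * (Y * (X * Y))) - \<phi> (D * L) * e"
    by (simp add: rn0)
  have b: "Y * (X * (Y * (X * X))) = Y * (X * Y) + \<phi> D * (X * (Y * (X * Y))) - \<phi> (D * L) * (e * (Y * (X * Y)))"
    by (simp only: r5_z) (simp add: rn0)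
  from a b have "\<phi> (D * L) * (e * (Y * (X * Y))) = \<phi> (D * L) * e" by simp
  then have "\<phi> (inverse (D * L)) * (\<phi> (D * L) * (e * (Y * (X * Y)))) = \<phi> (inverse (D * L)) * (\<phi> (D * L) * e)"
    by simp
  moreover have c: "inverse (D * L) * (D * L) = 1" using Dnz Lnz by (simp add: field_simps)
  ultimately show ?thesis by (simp only: phi_phi c phi_one mult_1_left)
qed

lemma XYe_1: "X * (Y * e) = \<phi> Q * (Y * e) - \<phi> (Q * Q1) * e"
  apply (rule Ycancel)
  apply (simp add: rn0 QQ0)
  done

lemma eYX_1: "e * (Y * X) = \<phi> Q * (e * Y) - \<phi> (Q * Q1) * e"
proof (rule Ycancel_r)
  have "e * (Y * X) * Y = e" using eYXY_1 by (simp add: mult.assoc)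
  moreover have "(\<phi> Q * (e * Y) - \<phi> (Q * Q1) * e) * Y = e"
    by (simp add: rn0 QQ0)
  ultimately show "e * (Y * X) * Y = (\<phi> Q * (e * Y) - \<phi> (Q * Q1) * e) * Y" by simp
qed



lemma XYe_z: "X * (Y * (e * z)) = \<phi> Q * (Y * (e * z)) - \<phi> (Q * Q1) * (e * z)"
  using zv[OF XYe_1, of z] by (simp add: mult.assoc left_diff_distrib)
lemma eYX_z: "e * (Y * (X * z)) = \<phi> Q * (e * (Y * z)) - \<phi> (Q * Q1) * (e * z)"
  using zv[OF eYX_1, of z] by (simp add: mult.assoc left_diff_distrib)
lemma eYXY_z: "e * (Y * (X * (Y * z))) = e * z"
  using zv[OF eYXY_1, of z] by (simp add: mult.assoc)

lemmas rn = rn0 QQ0 hQ XYe_1 XYe_z eYX_1 eYX_z eYXY_1 eYXY_z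

lemma scal: "\<phi> (Q1 + Q * Q1 * L - D * L * As) * e = 0"
proof -
  have E1: "e * (Y * (X * X)) = e * Y + \<phi> D * (\<phi> Q * (e * Y) - \<phi> (Q * Q1) * e) - \<phi> (D * L) * (\<phi> As * e)"
    by (simp only: XX_1 ring_distribs mult_1_right phiY phie phiY1 phie1 r8_1 eYX_1 mult.assoc)
  have E2: "e * (Y * (X * X)) = \<phi> Q * (\<phi> Q * (e * Y) - \<phi> (Q * Q1) * e) - \<phi> (Q * Q1) * (\<phi> L * e)"
    by (simp only: eYX_z eYX_1 ring_distribs phie phi_phi r1b)
  have c0: "1 + D * Q - Q * Q = 0" unfolding hD using QQ0 by (simp add: algebra_simps)
  have c1: "- (D * (Q * Q1)) - D * L * As + Q * (Q * Q1) + Q * Q1 * L = Q1 + Q * Q1 * L - D * L * As"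
    unfolding hD using QQ0 by (simp add: algebra_simps)
  have "\<phi> (Q1 + Q * Q1 * L - D * L * As) * e = \<phi> (1 + D * Q - Q * Q) * (e * Y) + \<phi> (- (D * (Q * Q1)) - D * L * As + Q * (Q * Q1) + Q * Q1 * L) * e"
    by (simp only: c0 c1 phi_zero mult_zero_left add_0_left)
  also have "\<dots> = (e * Y + \<phi> D * (\<phi> Q * (e * Y) - \<phi> (Q * Q1) * e) - \<phi> (D * L) * (\<phi> As * e))
     - (\<phi> Q * (\<phi> Q * (e * Y) - \<phi> (Q * Q1) * e) - \<phi> (Q * Q1) * (\<phi> L * e))"
    by (simp add: rn algebra_simps)
  also have "\<dots> = 0" using E1 E2 by simp
  finally show ?thesis .
qed

definition bs :: "nat \<Rightarrow> 'a" where
  "bs i = (if i = 0 then 1 else if i = 1 then X else if i = 2 then Y else if i = 3 then X * Y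
    else if i = 4 then Y * X else if i = 5 then X * (Y * X) else if i = 6 then Y * (X * Y)
    else if i = 7 then X * (Y * (X * Y)) else if i = 8 then e else if i = 9 then Y * e
    else if i = 10 then e * Y else Y * (e * Y))"

definition CX :: "nat \<Rightarrow> 'k v12" where
  "CX i = (if i = 0 then V 0 (1) 0 0 0 0 0 0 0 0 0 0 else
    if i = 1 then V (1) (D) 0 0 0 0 0 0 (-(D*L)) 0 0 0 else
    if i = 2 then V 0 0 0 (1) 0 0 0 0 0 0 0 0 else
    if i = 3 then V 0 0 (1) (D) 0 0 0 0 0 0 (-(D*L)) 0 else
    if i = 4 then V 0 0 0 0 0 (1) 0 0 0 0 0 0 else
    if i = 5 then V 0 0 0 0 (1) (D) 0 0 (D*L*(Q*Q1)) 0 (-(D*L*Q)) 0 else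
    if i = 6 then V 0 0 0 0 0 0 0 (1) 0 0 0 0 else
    if i = 7 then V 0 0 0 0 0 0 (1) (D) (-(D*L)) 0 0 0 else
    if i = 8 then V 0 0 0 0 0 0 0 0 (L) 0 0 0 else
    if i = 9 then V 0 0 0 0 0 0 0 0 (-(Q*Q1)) (Q) 0 0 else
    if i = 10 then V 0 0 0 0 0 0 0 0 0 0 (L) 0 else
    V 0 0 0 0 0 0 0 0 0 0 (-(Q*Q1)) (Q))"

definition CY :: "nat \<Rightarrow> 'k v12" where
  "CY i = (if i = 0 then V 0 0 (1) 0 0 0 0 0 0 0 0 0 else
    if i = 1 then V 0 0 0 0 (1) 0 0 0 0 0 0 0 else
    if i = 2 then V (Q0) 0 (Q1) 0 0 0 0 0 0 0 0 0 else
    if i = 3 then V 0 0 0 0 0 0 (1) 0 0 0 0 0 else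
    if i = 4 then V 0 (Q0) 0 0 (Q1) 0 0 0 0 0 0 0 else
    if i = 5 then V 0 0 0 0 0 0 0 (1) 0 0 0 0 else
    if i = 6 then V 0 0 0 (Q0) 0 0 (Q1) 0 0 0 0 0 else
    if i = 7 then V 0 0 0 0 0 (Q0) 0 (Q1) 0 0 0 0 else
    if i = 8 then V 0 0 0 0 0 0 0 0 0 (1) 0 0 else
    if i = 9 then V 0 0 0 0 0 0 0 0 (Q0) (Q1) 0 0 else
    if i = 10 then V 0 0 0 0 0 0 0 0 0 0 0 (1) else
    V 0 0 0 0 0 0 0 0 0 0 (Q0) (Q1))"

definition CE :: "nat \<Rightarrow> 'k v12" where
  "CE i = (if i = 0 then V 0 0 0 0 0 0 0 0 (1) 0 0 0 else
    if i = 1 then V 0 0 0 0 0 0 0 0 (L) 0 0 0 else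
    if i = 2 then V 0 0 0 0 0 0 0 0 0 0 (1) 0 else
    if i = 3 then V 0 0 0 0 0 0 0 0 0 0 (L) 0 else
    if i = 4 then V 0 0 0 0 0 0 0 0 (-(Q*Q1)) 0 (Q) 0 else
    if i = 5 then V 0 0 0 0 0 0 0 0 (-(L*(Q*Q1))) 0 (L*Q) 0 else
    if i = 6 then V 0 0 0 0 0 0 0 0 (1) 0 0 0 else
    if i = 7 then V 0 0 0 0 0 0 0 0 (L) 0 0 0 else
    if i = 8 then V 0 0 0 0 0 0 0 0 (Xs) 0 0 0 else
    if i = 9 then V 0 0 0 0 0 0 0 0 (As) 0 0 0 else
    if i = 10 then V 0 0 0 0 0 0 0 0 0 0 (Xs) 0 else
    V 0 0 0 0 0 0 0 0 0 0 (As) 0)"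

lemma less12: "i < (12::nat) \<Longrightarrow> i = 0 \<or> i = 1 \<or> i = 2 \<or> i = 3 \<or> i = 4 \<or> i = 5 \<or> i = 6 \<or> i = 7 \<or> i = 8 \<or> i = 9 \<or> i = 10 \<or> i = 11"
  by arith

lemma colX: "i < 12 \<Longrightarrow> X * bs i = ev bs (CX i)"
  apply (drule less12)
  apply (elim disjE)
  apply (simp_all add: bs_def CX_def ev_def rn)
  done


lemma colY: "i < 12 \<Longrightarrow> Y * bs i = ev bs (CY i)"
  apply (drule less12)
  apply (elim disjE)
  apply (simp_all add: bs_def CY_def ev_def rn)
  done

lemma colE: "i < 12 \<Longrightarrow> e * bs i = ev bs (CE i)"
  apply (drule less12)
  apply (elim disjE)
  apply (simp_all add: bs_def CE_def ev_def rn)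
  done

lemma mulR: "(\<phi> a + \<phi> b * X + \<phi> c * e) * ev bs v
   = ev bs (vadd (smul a v) (vadd (smul b (lin v CX)) (smul c (lin v CE))))"
  by (simp add: ev_add ev_smul mult_ev[OF colX] mult_ev[OF colE] distrib_right mult.assoc)

lemma mulK: "((\<phi> c + Y) * \<phi> f) * ev bs v = ev bs (smul f (vadd (smul c v) (lin v CY)))"
proof -
  have "((\<phi> c + Y) * \<phi> f) * ev bs v = \<phi> f * ((\<phi> c + Y) * ev bs v)"
    by (metis mult.assoc phi_central)
  then show ?thesis
    by (simp add: ev_add ev_smul mult_ev[OF colY] distrib_right)
qed

lemma ev_unit: "ev bs (V 1 0 0 0 0 0 0 0 0 0 0 0) = 1"
  by (simp add: ev_def bs_def phi_one)



lemma CX_0: "CX 0 = V 0 (1) 0 0 0 0 0 0 0 0 0 0" by (simp add: CX_def)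
lemma CX_1: "CX 1 = V (1) (D) 0 0 0 0 0 0 (-(D*L)) 0 0 0" by (simp add: CX_def)
lemma CX_2: "CX 2 = V 0 0 0 (1) 0 0 0 0 0 0 0 0" by (simp add: CX_def)
lemma CX_3: "CX 3 = V 0 0 (1) (D) 0 0 0 0 0 0 (-(D*L)) 0" by (simp add: CX_def)
lemma CX_4: "CX 4 = V 0 0 0 0 0 (1) 0 0 0 0 0 0" by (simp add: CX_def)
lemma CX_5: "CX 5 = V 0 0 0 0 (1) (D) 0 0 (D*L*(Q*Q1)) 0 (-(D*L*Q)) 0" by (simp add: CX_def)
lemma CX_6: "CX 6 = V 0 0 0 0 0 0 0 (1) 0 0 0 0" by (simp add: CX_def)
lemma CX_7: "CX 7 = V 0 0 0 0 0 0 (1) (D) (-(D*L)) 0 0 0" by (simp add: CX_def)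
lemma CX_8: "CX 8 = V 0 0 0 0 0 0 0 0 (L) 0 0 0" by (simp add: CX_def)
lemma CX_9: "CX 9 = V 0 0 0 0 0 0 0 0 (-(Q*Q1)) (Q) 0 0" by (simp add: CX_def)
lemma CX_10: "CX 10 = V 0 0 0 0 0 0 0 0 0 0 (L) 0" by (simp add: CX_def)
lemma CX_11: "CX 11 = V 0 0 0 0 0 0 0 0 0 0 (-(Q*Q1)) (Q)" by (simp add: CX_def)
lemmas CX_simps = CX_0 CX_1 CX_2 CX_3 CX_4 CX_5 CX_6 CX_7 CX_8 CX_9 CX_10 CX_11
lemma CY_0: "CY 0 = V 0 0 (1) 0 0 0 0 0 0 0 0 0" by (simp add: CY_def)
lemma CY_1: "CY 1 = V 0 0 0 0 (1) 0 0 0 0 0 0 0" by (simp add: CY_def)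
lemma CY_2: "CY 2 = V (Q0) 0 (Q1) 0 0 0 0 0 0 0 0 0" by (simp add: CY_def)
lemma CY_3: "CY 3 = V 0 0 0 0 0 0 (1) 0 0 0 0 0" by (simp add: CY_def)
lemma CY_4: "CY 4 = V 0 (Q0) 0 0 (Q1) 0 0 0 0 0 0 0" by (simp add: CY_def)
lemma CY_5: "CY 5 = V 0 0 0 0 0 0 0 (1) 0 0 0 0" by (simp add: CY_def)
lemma CY_6: "CY 6 = V 0 0 0 (Q0) 0 0 (Q1) 0 0 0 0 0" by (simp add: CY_def)
lemma CY_7: "CY 7 = V 0 0 0 0 0 (Q0) 0 (Q1) 0 0 0 0" by (simp add: CY_def)
lemma CY_8: "CY 8 = V 0 0 0 0 0 0 0 0 0 (1) 0 0" by (simp add: CY_def)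
lemma CY_9: "CY 9 = V 0 0 0 0 0 0 0 0 (Q0) (Q1) 0 0" by (simp add: CY_def)
lemma CY_10: "CY 10 = V 0 0 0 0 0 0 0 0 0 0 0 (1)" by (simp add: CY_def)
lemma CY_11: "CY 11 = V 0 0 0 0 0 0 0 0 0 0 (Q0) (Q1)" by (simp add: CY_def)
lemmas CY_simps = CY_0 CY_1 CY_2 CY_3 CY_4 CY_5 CY_6 CY_7 CY_8 CY_9 CY_10 CY_11
lemma CE_0: "CE 0 = V 0 0 0 0 0 0 0 0 (1) 0 0 0" by (simp add: CE_def)
lemma CE_1: "CE 1 = V 0 0 0 0 0 0 0 0 (L) 0 0 0" by (simp add: CE_def)
lemma CE_2: "CE 2 = V 0 0 0 0 0 0 0 0 0 0 (1) 0" by (simp add: CE_def)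
lemma CE_3: "CE 3 = V 0 0 0 0 0 0 0 0 0 0 (L) 0" by (simp add: CE_def)
lemma CE_4: "CE 4 = V 0 0 0 0 0 0 0 0 (-(Q*Q1)) 0 (Q) 0" by (simp add: CE_def)
lemma CE_5: "CE 5 = V 0 0 0 0 0 0 0 0 (-(L*(Q*Q1))) 0 (L*Q) 0" by (simp add: CE_def)
lemma CE_6: "CE 6 = V 0 0 0 0 0 0 0 0 (1) 0 0 0" by (simp add: CE_def)
lemma CE_7: "CE 7 = V 0 0 0 0 0 0 0 0 (L) 0 0 0" by (simp add: CE_def)
lemma CE_8: "CE 8 = V 0 0 0 0 0 0 0 0 (Xs) 0 0 0" by (simp add: CE_def)
lemma CE_9: "CE 9 = V 0 0 0 0 0 0 0 0 (As) 0 0 0" by (simp add: CE_def)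
lemma CE_10: "CE 10 = V 0 0 0 0 0 0 0 0 0 0 (Xs) 0" by (simp add: CE_def)
lemma CE_11: "CE 11 = V 0 0 0 0 0 0 0 0 0 0 (As) 0" by (simp add: CE_def)
lemmas CE_simps = CE_0 CE_1 CE_2 CE_3 CE_4 CE_5 CE_6 CE_7 CE_8 CE_9 CE_10 CE_11

lemma certrule:
  fixes P P' :: "'k"
  assumes "P - P' = cA * ((Q - Q0) * As - Q1 * (1 + Q * L) * Li) + cx * ((Q - Q0) * Xs - ((Q - Q0) - L + Li))
     + cq * (Q * Q0 - 1) + cL * (L * Li - 1)"
    and "(Q - Q0) * As = Q1 * (1 + Q * L) * Li" and "(Q - Q0) * Xs = (Q - Q0) - L + Li"
    and "Q * Q0 = 1" and "L * Li = 1"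
  shows "P = P'"
  using assms by simp

definition mR :: "'k \<Rightarrow> 'k \<Rightarrow> 'k \<Rightarrow> 'k v12 \<Rightarrow> 'k v12" where
  "mR Li n m v = vadd (smul (- D * n * (n + Q * Li * m)) v) (vadd (smul ((n - m) * (n + Q * Li * m)) (lin v CX)) (smul (D * n * (n - m)) (lin v CE)))"
definition mK :: "'k \<Rightarrow> 'k v12 \<Rightarrow> 'k v12" where
  "mK t v = vadd (smul (t^2 * Q1) v) (smul (1 - t^2) (lin v CY))"

lemma vec_eq:
  fixes t1 t2 Li :: 'k
  assumes hLi: "L * Li = 1"
    and hX: "D * Xs = D - L + Li" and hA: "D * As = Q1 * (1 + Q * L) * Li"
  shows "mR Li t1 t2 (mK t1 (mR Li (t1*t2) 1 (mK t2 (V 1 0 0 0 0 0 0 0 0 0 0 0))))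
       = mK t2 (mR Li (t1*t2) 1 (mK t1 (mR Li t1 t2 (V 1 0 0 0 0 0 0 0 0 0 0 0))))"
proof -
  have hX': "(Q - Q0) * Xs = (Q - Q0) - L + Li" using hX hD by simp
  have hA': "(Q - Q0) * As = Q1 * (1 + Q * L) * Li" using hA hD by simp
  show ?thesis
  apply (simp only: mR_def mK_def lin.simps vadd.simps smul.simps CX_simps CY_simps CE_simps v12.inject mult_zero_left mult_zero_right add_0_left add_0_right mult_1_left mult_1_right minus_zero diff_zero)
  apply (simp only: hD)
  apply (intro conjI)
  subgoal by algebra
  subgoal by algebra
  subgoal by algebra
  subgoal by algebra
  subgoal by algebra
  subgoal by algebra
  subgoal by algebra
  subgoal by algebra
  subgoal
    apply (rule certrule[where Li=Li and cA="0" and cx="0" and cq="(Li * Q * Q0 * t1 * t2 + (-1) * Li * Q * Q0 * t1 * t2^3 + (-1) * Li * Q * Q0 * t1^2 + Li * Q * Q0 * t1^2 * t2^4 + Li * Q * Q0 * t1^4 + (-1) * Li * Q * Q0 * t1^4 * t2^4 + (-1) * Li * Q * Q0 * t1^5 * t2 + Li * Q * Q0 * t1^5 * t2^3 + (-1) * Li * Q^2 * t1 * t2 + Li * Q^2 * t1 * t2^3 + Li * Q^2 * t1^2 + (-1) * Li * Q^2 * t1^2 * t2^4 + (-1) * Li * Q^2 * t1^4 + Li * Q^2 * t1^4 * t2^4 + Li * Q^2 * t1^5 * t2 + (-1) * Li * Q^2 * t1^5 * t2^3 + (-1) * Q * t1^2 * t2^2 + Q * t1^2 * t2^4 + Q *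 t1^3 * t2 + (-1) * Q * t1^3 * t2^5 + (-1) * Q * t1^5 * t2 + Q * t1^5 * t2^5 + Q * t1^6 * t2^2 + (-1) * Q * t1^6 * t2^4 + Q0 * t1^2 * t2^2 + (-1) * Q0 * t1^2 * t2^4 + (-1) * Q0 * t1^3 * t2 + Q0 * t1^3 * t2^5 + Q0 * t1^5 * t2 + (-1) * Q0 * t1^5 * t2^5 + (-1) * Q0 * t1^6 * t2^2 + Q0 * t1^6 * t2^4)" and cL="0"])
    apply algebra
    using hA' hX' QQ0 hLi by simp_all
  subgoal
    apply (rule certrule[where Li=Li and cA="((-1) * Q * t1^2 * t2^2 + Q * t1^2 * t2^4 + Q * t1^3 * t2 + (-1) * Q * t1^3 * t2^5 + (-1) * Q * t1^5 * t2 + Q * t1^5 * t2^5 + Q * t1^6 * t2^2 + (-1) * Q * t1^6 * t2^4 + Q0 * t1^2 * t2^2 + (-1) * Q0 * t1^2 * t2^4 + (-1) * Q0 * t1^3 * t2 + Q0 * t1^3 * t2^5 + Q0 * t1^5 * t2 + (-1) * Q0 * t1^5 * t2^5 + (-1) * Q0 * t1^6 * t2^2 + Q0 * t1^6 * t2^4)" and cx="((-1) * Q * Q1 * t1^4 * t2^2 + Q * Q1 * t1^4 * t2^4 + Q * Q1 * t1^5 * t2 + (-1) * Q * Q1 * t1^5 * t2^5 + (-1) * Q * Q1 * t1^6 * t2^2 + Q * Q1 * t1^6 * t2^4 + Q0 * Q1 * t1^4 * t2^2 + (-1) * Q0 * Q1 * t1^4 * t2^4 + (-1) * Q0 * Q1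 * t1^5 * t2 + Q0 * Q1 * t1^5 * t2^5 + Q0 * Q1 * t1^6 * t2^2 + (-1) * Q0 * Q1 * t1^6 * t2^4)" and cq="(L * Li * Q1 * t1^2 * t2^2 + (-1) * L * Li * Q1 * t1^2 * t2^4 + (-1) * L * Li * Q1 * t1^3 * t2 + L * Li * Q1 * t1^3 * t2^5 + L * Li * Q1 * t1^5 * t2 + (-1) * L * Li * Q1 * t1^5 * t2^5 + (-1) * L * Li * Q1 * t1^6 * t2^2 + L * Li * Q1 * t1^6 * t2^4 + (-1) * L * Li^2 * Q * Q1 * t1^2 * t2^2 + L * Li^2 * Q * Q1 * t1^2 * t2^4 + L * Li^2 * Q * Q1 * t1^3 * t2 + (-1) * L * Li^2 * Q * Q1 * t1^3 * t2^5 + (-1) * L * Li^2 * Q * Q1 * t1^4 * t2^2 + L * Li^2 * Q * Q1 * t1^4 * t2^4 + (2) * Li * Q * Q1 * t1^2 * t2^2 + (-2) * Li * Q * Q1 * t1^2 * t2^4 + (-2) * Li * Q * Q1 * t1^3 * t2 + (2) * Li * Q * Q1 * t1^3 * t2^5 + (2) * Li * Q * Q1 * t1^4 * t2^2 + (-2) * Li * Q * Q1 * t1^4 * t2^4 + (-1) * Li * Q0 * Q1 * t1^2 * t2^2 + Li * Q0 * Q1 * t1^2 * t2^4 + Li * Q0 * Q1 * t1^3 * t2 + (-1) * Li * Q0 * Q1 * t1^3 * t2^5 + (-1) * Li * Q0 * Q1 * t1^4 * t2^2 + Li * Q0 * Q1 * t1^4 * t2^4 + (-1) * Q1 * t1^2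 * t2^2 + Q1 * t1^2 * t2^4 + Q1 * t1^3 * t2 + (-1) * Q1 * t1^3 * t2^5 + (-1) * Q1 * t1^5 * t2 + Q1 * t1^5 * t2^5 + Q1 * t1^6 * t2^2 + (-1) * Q1 * t1^6 * t2^4)" and cL="((-1) * Li * Q * Q1 * t1^2 * t2^2 + Li * Q * Q1 * t1^2 * t2^4 + Li * Q * Q1 * t1^3 * t2 + (-1) * Li * Q * Q1 * t1^3 * t2^5 + (-1) * Li * Q * Q1 * t1^4 * t2^2 + Li * Q * Q1 * t1^4 * t2^4 + Li * Q^3 * Q1 * t1^2 * t2^2 + (-1) * Li * Q^3 * Q1 * t1^2 * t2^4 + (-1) * Li * Q^3 * Q1 * t1^3 * t2 + Li * Q^3 * Q1 * t1^3 * t2^5 + Li * Q^3 * Q1 * t1^4 * t2^2 + (-1) * Li * Q^3 * Q1 * t1^4 * t2^4 + (-1) * Q^2 * Q1 * t1^2 * t2^2 + Q^2 * Q1 * t1^2 * t2^4 + Q^2 * Q1 * t1^3 * t2 + (-1) * Q^2 * Q1 * t1^3 * t2^5 + (-1) * Q^2 * Q1 * t1^5 * t2 + Q^2 * Q1 * t1^5 * t2^5 + Q^2 * Q1 * t1^6 * t2^2 + (-1) * Q^2 * Q1 * t1^6 * t2^4 + Q1 * t1^2 * t2^2 + (-1) * Q1 * t1^2 * t2^4 + (-1) * Q1 * t1^3 * t2 + Q1 * t1^3 * t2^5 + Q1 * t1^5 * t2 + (-1) * Q1 * t1^5 * t2^5 + (-1) * Q1 * t1^6 * t2^2 + Q1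 * t1^6 * t2^4)"])
    apply algebra
    using hA' hX' QQ0 hLi by simp_all
  subgoal
    apply (rule certrule[where Li=Li and cA="(Q * t1^2 * t2^2 + (-1) * Q * t1^2 * t2^4 + (-1) * Q * t1^3 * t2 + Q * t1^3 * t2^5 + Q * t1^5 * t2 + (-1) * Q * t1^5 * t2^5 + (-1) * Q * t1^6 * t2^2 + Q * t1^6 * t2^4 + (-1) * Q0 * t1^2 * t2^2 + Q0 * t1^2 * t2^4 + Q0 * t1^3 * t2 + (-1) * Q0 * t1^3 * t2^5 + (-1) * Q0 * t1^5 * t2 + Q0 * t1^5 * t2^5 + Q0 * t1^6 * t2^2 + (-1) * Q0 * t1^6 * t2^4)" and cx="(Q * Q1 * t1^4 * t2^2 + (-1) * Q * Q1 * t1^4 * t2^4 + (-1) * Q * Q1 * t1^5 * t2 + Q * Q1 * t1^5 * t2^5 + Q * Q1 * t1^6 * t2^2 + (-1) * Q * Q1 * t1^6 * t2^4 + (-1) * Q0 * Q1 * t1^4 * t2^2 + Q0 * Q1 * t1^4 * t2^4 + Q0 * Q1 * t1^5 * t2 + (-1) * Q0 * Q1 * t1^5 * t2^5 + (-1) * Q0 * Q1 * t1^6 * t2^2 + Q0 * Q1 * t1^6 * t2^4)" and cq="((-1) * L * Li * Q1 * t1^2 * t2^2 + L * Li * Q1 * t1^2 * t2^4 + L * Li * Q1 * t1^3 * t2 + (-1) * L * Li * Q1 * t1^3 * t2^5 + (-1) * L * Li * Q1 * t1^5 * t2 + L * Li * Q1 * t1^5 * t2^5 + L * Li * Q1 *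 t1^6 * t2^2 + (-1) * L * Li * Q1 * t1^6 * t2^4 + L * Li^2 * Q * Q1 * t1^2 * t2^2 + (-1) * L * Li^2 * Q * Q1 * t1^2 * t2^4 + (-1) * L * Li^2 * Q * Q1 * t1^3 * t2 + L * Li^2 * Q * Q1 * t1^3 * t2^5 + L * Li^2 * Q * Q1 * t1^4 * t2^2 + (-1) * L * Li^2 * Q * Q1 * t1^4 * t2^4 + (-2) * Li * Q * Q1 * t1^2 * t2^2 + (2) * Li * Q * Q1 * t1^2 * t2^4 + (2) * Li * Q * Q1 * t1^3 * t2 + (-2) * Li * Q * Q1 * t1^3 * t2^5 + (-2) * Li * Q * Q1 * t1^4 * t2^2 + (2) * Li * Q * Q1 * t1^4 * t2^4 + Li * Q0 * Q1 * t1^2 * t2^2 + (-1) * Li * Q0 * Q1 * t1^2 * t2^4 + (-1) * Li * Q0 * Q1 * t1^3 * t2 + Li * Q0 * Q1 * t1^3 * t2^5 + Li * Q0 * Q1 * t1^4 * t2^2 + (-1) * Li * Q0 * Q1 * t1^4 * t2^4 + Q1 * t1^2 * t2^2 + (-1) * Q1 * t1^2 * t2^4 + (-1) * Q1 * t1^3 * t2 + Q1 * t1^3 * t2^5 + Q1 * t1^5 * t2 + (-1) * Q1 * t1^5 * t2^5 + (-1) * Q1 * t1^6 * t2^2 + Q1 * t1^6 * t2^4)" and cL="(Li * Q * Q1 * t1^2 * t2^2 + (-1) * Li * Q * Q1 * t1^2 * t2^4 + (-1) * Li * Q * Q1 * t1^3 * t2 + Li * Q * Q1 * t1^3 * t2^5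 + Li * Q * Q1 * t1^4 * t2^2 + (-1) * Li * Q * Q1 * t1^4 * t2^4 + (-1) * Li * Q^3 * Q1 * t1^2 * t2^2 + Li * Q^3 * Q1 * t1^2 * t2^4 + Li * Q^3 * Q1 * t1^3 * t2 + (-1) * Li * Q^3 * Q1 * t1^3 * t2^5 + (-1) * Li * Q^3 * Q1 * t1^4 * t2^2 + Li * Q^3 * Q1 * t1^4 * t2^4 + Q^2 * Q1 * t1^2 * t2^2 + (-1) * Q^2 * Q1 * t1^2 * t2^4 + (-1) * Q^2 * Q1 * t1^3 * t2 + Q^2 * Q1 * t1^3 * t2^5 + Q^2 * Q1 * t1^5 * t2 + (-1) * Q^2 * Q1 * t1^5 * t2^5 + (-1) * Q^2 * Q1 * t1^6 * t2^2 + Q^2 * Q1 * t1^6 * t2^4 + (-1) * Q1 * t1^2 * t2^2 + Q1 * t1^2 * t2^4 + Q1 * t1^3 * t2 + (-1) * Q1 * t1^3 * t2^5 + (-1) * Q1 * t1^5 * t2 + Q1 * t1^5 * t2^5 + Q1 * t1^6 * t2^2 + (-1) * Q1 * t1^6 * t2^4)"])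
    apply algebra
    using hA' hX' QQ0 hLi by simp_all
  subgoal by algebra
  done
qed


definition Rt :: "'k \<Rightarrow> 'k \<Rightarrow> 'k \<Rightarrow> 'a" where
  "Rt Li n m = \<phi> (- D * n * (n + Q * Li * m)) + \<phi> ((n - m) * (n + Q * Li * m)) * X + \<phi> (D * n * (n - m)) * e"
definition Kt :: "'k \<Rightarrow> 'a" where
  "Kt t = \<phi> (t^2 * Q1) + \<phi> (1 - t^2) * Y"

lemma mulRt: "Rt Li n m * ev bs v = ev bs (mR Li n m v)"
  unfolding Rt_def mR_def by (rule mulR)

lemma mulKt: "Kt t * ev bs v = ev bs (mK t v)"
  unfolding Kt_def mK_def
  by (simp add: ev_add ev_smul mult_ev[OF colY] distrib_right mult.assoc)

lemma core:
  fixes t1 t2 Li :: 'k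
  assumes hLi: "L * Li = 1"
    and hX: "D * Xs = D - L + Li" and hA: "D * As = Q1 * (1 + Q * L) * Li"
  shows "Rt Li t1 t2 * Kt t1 * Rt Li (t1*t2) 1 * Kt t2 = Kt t2 * Rt Li (t1*t2) 1 * Kt t1 * Rt Li t1 t2"
proof -
  have "Rt Li t1 t2 * Kt t1 * Rt Li (t1*t2) 1 * Kt t2 = Rt Li t1 t2 * Kt t1 * Rt Li (t1*t2) 1 * Kt t2 * ev bs (V 1 0 0 0 0 0 0 0 0 0 0 0)"
    by (simp add: ev_unit)
  also have "\<dots> = ev bs (mR Li t1 t2 (mK t1 (mR Li (t1*t2) 1 (mK t2 (V 1 0 0 0 0 0 0 0 0 0 0 0)))))"
    by (simp only: mult.assoc mulRt mulKt)
  also have "\<dots> = ev bs (mK t2 (mR Li (t1*t2) 1 (mK t1 (mR Li t1 t2 (V 1 0 0 0 0 0 0 0 0 0 0 0)))))"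
    using vec_eq[OF hLi hX hA] by simp
  also have "\<dots> = Kt t2 * Rt Li (t1*t2) 1 * Kt t1 * Rt Li t1 t2 * ev bs (V 1 0 0 0 0 0 0 0 0 0 0 0)"
    by (simp only: mult.assoc mulRt mulKt)
  also have "\<dots> = Kt t2 * Rt Li (t1*t2) 1 * Kt t1 * Rt Li t1 t2"
    by (simp add: ev_unit)
  finally show ?thesis .
qed

lemma lin3: "\<phi> s * (\<phi> a + \<phi> b * X + \<phi> c * e) = \<phi> (s * a) + \<phi> (s * b) * X + \<phi> (s * c) * e"
  by (simp add: distrib_left phi_mult mult.assoc)

lemma lin2: "\<phi> s * (\<phi> a + \<phi> b * Y) = \<phi> (s * a) + \<phi> (s * b) * Y"
  by (simp add: distrib_left phi_mult mult.assoc)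

lemma Rs_scale:
  assumes "t2 \<noteq> 0"
  shows "Rmat \<phi> D Q L X e (t1 / t2) = \<phi> (inverse (t2^2)) * Rt (inverse L) t1 t2"
proof -
  have c1: "- D * (t1 / t2) * (t1 / t2 + Q * inverse L) = inverse (t2^2) * (- D * t1 * (t1 + Q * inverse L * t2))"
    using assms by (simp add: field_simps power2_eq_square)
  have c2: "(t1 / t2 - 1) * (t1 / t2 + Q * inverse L) = inverse (t2^2) * ((t1 - t2) * (t1 + Q * inverse L * t2))"
    using assms by (simp add: field_simps power2_eq_square)
  have c3: "D * (t1 / t2) * (t1 / t2 - 1) = inverse (t2^2) * (D * t1 * (t1 - t2))"
    using assms by (simp add: field_simps power2_eq_square)
  show ?thesis
    unfolding Rmat_def Rt_def lin3 c1 c2 c3 ..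
qed

lemma Rp_scale: "Rmat \<phi> D Q L X e (t1 * t2) = Rt (inverse L) (t1 * t2) 1"
  unfolding Rmat_def Rt_def by simp

lemma K_scale:
  assumes "1 - t^2 \<noteq> 0"
  shows "Kmat \<phi> Q1 Y f t = \<phi> (f t * inverse (1 - t^2)) * Kt t"
proof -
  have c1: "f t * inverse (1 - t^2) * (t^2 * Q1) = t^2 * Q1 * inverse (1 - t^2) * f t"
    by (simp add: algebra_simps)
  have c2: "f t * inverse (1 - t^2) * (1 - t^2) = f t"
    using assms by (simp add: field_simps)
  have "Kmat \<phi> Q1 Y f t = \<phi> (t^2 * Q1 * inverse (1 - t^2) * f t) + \<phi> (f t) * Y"
    unfolding Kmat_def by (simp only: distrib_right phi_mult phiY1)
  also have "\<dots> = \<phi> (f t * inverse (1 - t^2)) * Kt t"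
    unfolding Kt_def lin2 c1 c2 ..
  finally show ?thesis .
qed

end

lemma indep_nz:
  fixes \<iota> :: "'r::idom \<Rightarrow> 'k::field"
  assumes iota_add: "\<And>a b. \<iota> (a + b) = \<iota> a + \<iota> b"
    and iota_one: "\<iota> 1 = 1"
    and indep: "alg_indep2 \<iota> t1 t2"
  shows "t2 \<noteq> 0" "1 - t1^2 \<noteq> 0" "1 - t2^2 \<noteq> 0"
proof -
  have i0: "\<iota> 0 = 0" using iota_add[of 0 0] by (metis add.right_neutral add_left_cancel)
  have ineg: "\<iota> (- a) = - \<iota> a" for a
    using iota_add[of a "-a"] i0 by (simp add: eq_neg_iff_add_eq_0 add.commute)
  let ?f = "\<lambda>c. poly (map_poly \<iota> c) t1"
  have f0: "?f 0 = 0" by simp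
  have fc: "?f (pCons a 0) = \<iota> a" for a by (simp add: map_poly_pCons i0)
  have fp: "?f (pCons 1 (pCons 0 (pCons (-1) 0))) = 1 - t1^2"
    by (simp add: map_poly_pCons i0 ineg iota_one power2_eq_square)
  have H: "\<And>p. p \<noteq> 0 \<Longrightarrow> poly (map_poly ?f p) t2 \<noteq> 0"
    using indep unfolding alg_indep2_def by blast
  have "poly (map_poly ?f (pCons 0 (pCons (pCons 1 0) 0))) t2 \<noteq> 0"
    by (rule H) simp
  then show "t2 \<noteq> 0" by (simp add: map_poly_pCons[of ?f, OF f0] fc iota_one)
  have "poly (map_poly ?f (pCons (pCons 1 (pCons 0 (pCons (-1) 0))) 0)) t2 \<noteq> 0"
    by (rule H) simp
  then show "1 - t1^2 \<noteq> 0" by (simp only: map_poly_pCons[of ?f, OF f0] fp map_poly_0 poly_pCons poly_0 mult_zero_right add_0_right not_False_eq_True)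
  have "poly (map_poly ?f (pCons (pCons 1 0) (pCons 0 (pCons (pCons (-1) 0) 0)))) t2 \<noteq> 0"
    by (rule H) simp
  then show "1 - t2^2 \<noteq> 0" by (simp add: map_poly_pCons[of ?f, OF f0] fc iota_one ineg power2_eq_square)
qed

theorem proposition20:
  fixes \<iota> :: "'r::idom \<Rightarrow> 'k::field"
    and \<phi> :: "'k \<Rightarrow> 'a::ring_1"
    and q lam x q0 A q1 :: 'r
    and Y X1 e1 :: 'a
    and t1 t2 :: 'k
    and f1 :: "'k \<Rightarrow> 'k"
  defines "\<delta> \<equiv> q - q0"
  (* R embeds into the field k (which contains F(t1,t2)) *)
  assumes iota_add: "\<And>a b. \<iota> (a + b) = \<iota> a + \<iota> b"
    and iota_mult: "\<And>a b. \<iota> (a * b) = \<iota> a * \<iota> b"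
    and iota_one: "\<iota> 1 = 1"
    and iota_inj: "inj \<iota>"
  (* t1, t2 independent indeterminates over R *)
    and indep: "alg_indep2 \<iota> t1 t2"
  (* 'a is a k-algebra via the central ring homomorphism phi *)
    and phi_add: "\<And>a b. \<phi> (a + b) = \<phi> a + \<phi> b"
    and phi_mult: "\<And>a b. \<phi> (a * b) = \<phi> a * \<phi> b"
    and phi_one: "\<phi> 1 = 1"
    and phi_central: "\<And>a z. \<phi> a * z = z * \<phi> a"
  (* standing assumptions on the parameters of R *)
    and units: "q dvd 1" "lam dvd 1" "x dvd 1" "q0 dvd 1"
    and q0_def: "q0 * q = 1"
    and x_rel: "\<iota> x * \<iota> \<delta> = \<iota> \<delta> - \<iota> lam + inverse (\<iota> lam)"
    and A_rel: "A * (1 - q0 * lam) = q1 * x"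
  (* defining relations of BB_2 *)
    and Y_inv: "\<exists>Yi. Y * Yi = 1 \<and> Yi * Y = 1"
    and X1_inv: "\<exists>Xi. X1 * Xi = 1 \<and> Xi * X1 = 1"
    and r1: "X1 * e1 = \<phi> (\<iota> lam) * e1" "e1 * X1 = \<phi> (\<iota> lam) * e1"
    and r2: "e1 * e1 = \<phi> (\<iota> x) * e1"
    and r3: "X1 * (X1 - \<phi> (\<iota> \<delta>) + \<phi> (\<iota> \<delta>) * e1) = 1"
            "(X1 - \<phi> (\<iota> \<delta>) + \<phi> (\<iota> \<delta>) * e1) * X1 = 1"
    and r4: "X1 * X1 = 1 + \<phi> (\<iota> \<delta>) * X1 - \<phi> (\<iota> (\<delta> * lam)) * e1"
    and r5: "X1 * Y * X1 * Y = Y * X1 * Y * X1"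
    and r6: "Y * Y = \<phi> (\<iota> q1) * Y + \<phi> (\<iota> q0)"
    and r7: "Y * X1 * Y * e1 = e1"
    and r8: "e1 * Y * e1 = \<phi> (\<iota> A) * e1"
  (* nondegeneracy assumptions on BB_2 *)
    and e1_nz: "e1 \<noteq> 0"
    and e1_tf: "\<And>r. \<phi> (\<iota> r) * e1 = 0 \<Longrightarrow> r = 0"
    and e1_Ye1_indep: "\<And>a b. \<phi> (\<iota> a) * e1 + \<phi> (\<iota> b) * (Y * e1) = 0 \<Longrightarrow> a = 0 \<and> b = 0"
  shows "Rmat \<phi> (\<iota> \<delta>) (\<iota> q) (\<iota> lam) X1 e1 (t1 / t2) * Kmat \<phi> (\<iota> q1) Y f1 t1
           * Rmat \<phi> (\<iota> \<delta>) (\<iota> q) (\<iota> lam) X1 e1 (t1 * t2) * Kmat \<phi> (\<iota> q1) Y f1 t2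
       = Kmat \<phi> (\<iota> q1) Y f1 t2 * Rmat \<phi> (\<iota> \<delta>) (\<iota> q) (\<iota> lam) X1 e1 (t1 * t2)
           * Kmat \<phi> (\<iota> q1) Y f1 t1 * Rmat \<phi> (\<iota> \<delta>) (\<iota> q) (\<iota> lam) X1 e1 (t1 / t2)"
proof -
  interpret alg \<phi>
    by unfold_locales (fact phi_add phi_mult phi_one phi_central)+
  have i0: "\<iota> 0 = 0" using iota_add[of 0 0] by (metis add.right_neutral add_left_cancel)
  have ineg: "\<iota> (- a) = - \<iota> a" for a
    using iota_add[of a "-a"] i0 by (simp add: eq_neg_iff_add_eq_0 add.commute)
  have idiff: "\<iota> (a - b) = \<iota> a - \<iota> b" for a b
    using iota_add[of a "-b"] ineg[of b] by simp
  obtain u where "1 = lam * u" using units(2) by (auto simp: dvd_def)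
  then have "1 = \<iota> lam * \<iota> u" using iota_mult iota_one by metis
  then have Lnz: "\<iota> lam \<noteq> 0" by auto
  have hQ: "\<iota> q0 * \<iota> q = 1" using q0_def iota_mult iota_one by metis
  have hD: "\<iota> \<delta> = \<iota> q - \<iota> q0" unfolding \<delta>_def by (rule idiff)
  have t2nz: "t2 \<noteq> 0" and n1: "1 - t1^2 \<noteq> 0" and n2: "1 - t2^2 \<noteq> 0"
    using indep_nz[OF iota_add iota_one indep] by auto
  show ?thesis
  proof (cases "\<iota> \<delta> = 0")
    case True
    have XX: "X1 * X1 = 1" using r4 True by (simp add: iota_mult)
    have R: "Rmat \<phi> (\<iota> \<delta>) (\<iota> q) (\<iota> lam) X1 e1 t = \<phi> ((t - 1) * (t + \<iota> q * inverse (\<iota> lam))) * X1" for t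
      unfolding Rmat_def True by simp
    have K: "Kmat \<phi> (\<iota> q1) Y f1 t = \<phi> (f1 t) * (\<phi> (t^2 * \<iota> q1 * inverse (1 - t^2)) + Y)" for t
      unfolding Kmat_def by (rule phi_central[symmetric])
    show ?thesis
      unfolding R K phi_pair
      using delta0_core[OF XX r5] by (simp add: ac_simps)
  next
    case False
    interpret bb \<phi> X1 Y e1 "\<iota> \<delta>" "\<iota> q" "\<iota> q0" "\<iota> q1" "\<iota> lam" "\<iota> x" "\<iota> A"
      apply unfold_locales
      using False Lnz hD hQ r1 r2 r4 r5 r6 r7 r8 Y_inv by (simp_all add: iota_mult)
    have "\<phi> (\<iota> (q1 + q * q1 * lam - \<delta> * lam * A)) * e1 = 0"
      using scal by (simp add: iota_add iota_mult idiff)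
    then have "q1 + q * q1 * lam - \<delta> * lam * A = 0" by (rule e1_tf)
    then have "\<iota> (q1 + q * q1 * lam - \<delta> * lam * A) = 0" using i0 by simp
    then have sA: "\<iota> q1 + \<iota> q * \<iota> q1 * \<iota> lam - \<iota> \<delta> * \<iota> lam * \<iota> A = 0"
      by (simp add: iota_add iota_mult idiff)
    have hA: "\<iota> \<delta> * \<iota> A = \<iota> q1 * (1 + \<iota> q * \<iota> lam) * inverse (\<iota> lam)"
      using sA Lnz by (simp add: field_simps)
    have hX: "\<iota> \<delta> * \<iota> x = \<iota> \<delta> - \<iota> lam + inverse (\<iota> lam)"
      using x_rel by (simp add: mult.commute)
    have hLi: "\<iota> lam * inverse (\<iota> lam) = 1" using Lnz by simp
    note C = core[OF hLi hX hA, of t1 t2]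
    have Rp': "Rmat \<phi> (\<iota> \<delta>) (\<iota> q) (\<iota> lam) X1 e1 (t1 * t2) = \<phi> 1 * Rt (inverse (\<iota> lam)) (t1 * t2) 1"
      by (simp add: Rp_scale phi_one)
    show ?thesis
      unfolding Rs_scale[OF t2nz] Rp' K_scale[OF n1] K_scale[OF n2] phi_pair C
      by (simp add: ac_simps)
  qed
qed

end
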